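(* For every integer $n\ge 1$, the polytope \[Q_n=\sum_{i=0}^{n-1}\mathrm{conv}\{e_{3i+1}+e_{3i+3},\,e_{3i+2}+e_{3n+1}\}+\sum_{0\le i<j\le n-1}\mathrm{conv}\{e_{3i+1}+e_{3i+3}+e_{3j+2},\,e_{3i+2}+e_{3j+1}+e_{3j+3},\,e_{3i+2}+e_{3j+2}+e_{3n+1}\}\subseteq\mathbb{R}^{3n+1}\] is unimodularly equivalent to \[\overline{Q}_n=\sum_{S\in\mathcal{I}_n}\Delta_S\subseteq\mathbb{R}^{n+1}.\]
   Context: All sums of polytopes are Minkowski sums; $e_k$ denotes standard basis vectors. $Q_n$ is a state polytope for the toric ideal of the code $P(2_n)$. Let $\mathcal{I}_n=\{S\cup\{n+1\} : S\subseteq[n],\ |S|\in\{1,2\}\}$, and for $S\subseteq[n+1]$ let $\Delta_S=\mathrm{conv}\{e_i\in\mathbb{R}^{n+1}: i\in S\}$. Polytopes $P,P'\subseteq\mathbb{R}^m$ are unimodularly equivalent if $P'=MP+v$ with $M\in\mathrm{GL}_m(\mathbb{Z})$, $v\in\mathbb{Z}^m$; for $P\subseteq\mathbb{R}^N$, $P'\subseteq\mathbb{R}^m$ with $N>m$, this means $P$ is unimodularly equivalent to $P'\times\{0\}\subseteq\mathbb{R}^N$. *)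

theory Defs
  imports "HOL-Analysis.Analysis"
begin

text \<open>Points of R^m are modelled as functions nat => real whose coordinates are indexed
by 1..m and vanish outside {1..m}.  Then R^m is contained in R^N for m <= N, and the
inclusion is exactly P' |-> P' x {0}.\<close>

type_synonym pt = "nat \<Rightarrow> real"

definition in_Rn :: "nat \<Rightarrow> pt \<Rightarrow> bool" where
  "in_Rn m x \<longleftrightarrow> (\<forall>i. i \<notin> {1..m} \<longrightarrow> x i = 0)"

definition unit_vec :: "nat \<Rightarrow> pt" ("e") where
  "unit_vec k = (\<lambda>i. if i = k then 1 else 0)"

definition vadd :: "pt \<Rightarrow> pt \<Rightarrow> pt" (infixl "\<oplus>" 65) where
  "x \<oplus> y = (\<lambda>i. x i + y i)"

definition conv_hull :: "pt set \<Rightarrow> pt set" where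
  "conv_hull V = {x. \<exists>c. (\<forall>v\<in>V. 0 \<le> c v) \<and> sum c V = 1 \<and> x = (\<lambda>i. \<Sum>v\<in>V. c v * v i)}"

definition msum :: "'a set \<Rightarrow> ('a \<Rightarrow> pt set) \<Rightarrow> pt set" where
  "msum I P = {x. \<exists>f. (\<forall>j\<in>I. f j \<in> P j) \<and> x = (\<lambda>i. \<Sum>j\<in>I. f j i)}"

definition mplus :: "pt set \<Rightarrow> pt set \<Rightarrow> pt set" where
  "mplus A B = {x. \<exists>a\<in>A. \<exists>b\<in>B. x = a \<oplus> b}"

definition Q :: "nat \<Rightarrow> pt set" where
  "Q n = mplus
     (msum {..<n} (\<lambda>i. conv_hull {e (3*i+1) \<oplus> e (3*i+3), e (3*i+2) \<oplus> e (3*n+1)}))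
     (msum {(i,j). i < j \<and> j \<le> n - 1}
        (\<lambda>(i,j). conv_hull {e (3*i+1) \<oplus> e (3*i+3) \<oplus> e (3*j+2),
                             e (3*i+2) \<oplus> e (3*j+1) \<oplus> e (3*j+3),
                             e (3*i+2) \<oplus> e (3*j+2) \<oplus> e (3*n+1)}))"

definition I_fam :: "nat \<Rightarrow> nat set set" where
  "I_fam n = {insert (n+1) S | S. S \<subseteq> {1..n} \<and> card S \<in> {1,2}}"

definition Delta :: "nat set \<Rightarrow> pt set" where
  "Delta S = conv_hull (e ` S)"

definition Qbar :: "nat \<Rightarrow> pt set" where
  "Qbar n = msum (I_fam n) Delta"

definition int_GL :: "nat \<Rightarrow> (nat \<Rightarrow> nat \<Rightarrow> int) \<Rightarrow> bool" where
  "int_GL N M \<longleftrightarrow> (\<exists>M'. \<forall>i\<in>{1..N}. \<forall>k\<in>{1..N}.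
      (\<Sum>j=1..N. M i j * M' j k) = (if i = k then 1 else 0)
    \<and> (\<Sum>j=1..N. M' i j * M j k) = (if i = k then 1 else 0))"

definition affine_map :: "nat \<Rightarrow> (nat \<Rightarrow> nat \<Rightarrow> int) \<Rightarrow> (nat \<Rightarrow> int) \<Rightarrow> pt \<Rightarrow> pt" where
  "affine_map N M v x = (\<lambda>i. if i \<in> {1..N} then (\<Sum>j=1..N. of_int (M i j) * x j) + of_int (v i) else 0)"

definition unimod_equiv :: "nat \<Rightarrow> pt set \<Rightarrow> pt set \<Rightarrow> bool" where
  "unimod_equiv N P P' \<longleftrightarrow> P \<subseteq> Collect (in_Rn N) \<and> P' \<subseteq> Collect (in_Rn N) \<and>
     (\<exists>M v. int_GL N M \<and> P' = affine_map N M v ` P)"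

text \<open>P in R^N and P' in R^m with N > m: P is unimodularly equivalent to P' x {0}
(which, in our encoding, is P' itself viewed inside R^N).\<close>
definition unimod_equiv_dims :: "nat \<Rightarrow> pt set \<Rightarrow> nat \<Rightarrow> pt set \<Rightarrow> bool" where
  "unimod_equiv_dims N P m P' \<longleftrightarrow> m < N \<and> P \<subseteq> Collect (in_Rn N) \<and>
     P' \<subseteq> Collect (in_Rn m) \<and> unimod_equiv N P P'"

end

theory Submission
  imports Defs
begin


definition dd :: "nat \<Rightarrow> nat \<Rightarrow> int" where "dd r c = (if r = c then 1 else 0)"

definition MM :: "nat \<Rightarrow> nat \<Rightarrow> nat \<Rightarrow> int" where
"MM n r c = (if c = 3*n+1 then dd r (n+1) else
   if (c-1) mod 3 = 0 then dd r ((c-1) div 3+1) + dd r (n+2+(c-1) div 3) + dd r (2*n+2+(c-1) div 3)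
   else if (c-1) mod 3 = 1 then dd r (2*n+2+(c-1) div 3) else - dd r (n+2+(c-1) div 3))"

definition MI :: "nat \<Rightarrow> nat \<Rightarrow> nat \<Rightarrow> int" where
"MI n r k = (if k \<le> n then dd r (3*(k-1)+1) + dd r (3*(k-1)+3) - dd r (3*(k-1)+2)
   else if k = n+1 then dd r (3*n+1)
   else if k \<le> 2*n+1 then - dd r (3*(k-n-2)+3)
   else dd r (3*(k-2*n-2)+2))"

lemma MM1: "q < n \<Longrightarrow> MM n r (3*q+1) = dd r (q+1) + dd r (n+2+q) + dd r (2*n+2+q)"
proof -
  assume q: "q < n"
  have a: "3*q+1-1 = 3*q" "(3*q) div 3 = q" "(3*q) mod 3 = 0" "3*q+1 \<noteq> 3*n+1" using q by auto
  show ?thesis unfolding MM_def by (simp only: a if_False if_True refl)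
qed
lemma MM2: "q < n \<Longrightarrow> MM n r (3*q+2) = dd r (2*n+2+q)"
proof -
  assume q: "q < n"
  have a: "3*q+2-1 = 3*q+1" "(3*q+1) div 3 = q" "(3*q+1) mod 3 = 1" "3*q+2 \<noteq> 3*n+1" "(1::nat) \<noteq> 0"
    using q by presburger+
  show ?thesis unfolding MM_def by (simp only: a if_False if_True refl)
qed
lemma MM3: "q < n \<Longrightarrow> MM n r (3*q+3) = - dd r (n+2+q)"
proof -
  assume q: "q < n"
  have a: "3*q+3-1 = 3*q+2" "(3*q+2) div 3 = q" "(3*q+2) mod 3 = 2" "3*q+3 \<noteq> 3*n+1" "(2::nat) \<noteq> 0"  "(2::nat) \<noteq> 1"
    using q by presburger+
  show ?thesis unfolding MM_def by (simp only: a if_False if_True refl)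
qed
lemma MM4: "MM n r (3*n+1) = dd r (n+1)"
  by (simp add: MM_def)

lemma MI1: "q < n \<Longrightarrow> MI n r (q+1) = dd r (3*q+1) + dd r (3*q+3) - dd r (3*q+2)"
  by (simp add: MI_def)
lemma MI2: "MI n r (n+1) = dd r (3*n+1)"
  by (simp add: MI_def)
lemma MI3: "q < n \<Longrightarrow> MI n r (n+2+q) = - dd r (3*q+3)"
  by (simp add: MI_def)
lemma MI4: "q < n \<Longrightarrow> MI n r (2*n+2+q) = dd r (3*q+2)"
  by (simp add: MI_def)

lemma sum_dd: "finite S \<Longrightarrow> (\<Sum>j\<in>S. f j * dd j c) = (if c \<in> S then f c else 0)"
  by (simp add: dd_def if_distrib[of "\<lambda>x. f _ * x"] cong: if_cong)

lemma cases_idx: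
  assumes "k \<in> {1..3*n+1::nat}"
  obtains q where "q < n" "k = q+1" | "k = n+1" | q where "q < n" "k = n+2+q"
   | q where "q < n" "k = 2*n+2+q"
proof -
  consider "k \<le> n" | "k = n+1" | "n+2 \<le> k \<and> k \<le> 2*n+1" | "2*n+2 \<le> k" using assms by force
  then show ?thesis
  proof cases
    case 1 then show ?thesis using that(1)[of "k-1"] assms by auto
  next
    case 2 then show ?thesis using that by auto
  next
    case 3 then show ?thesis using that(3)[of "k-n-2"] assms by auto
  next
    case 4 then show ?thesis using that(4)[of "k-2*n-2"] assms by auto
  qed
qed

lemma cases_col:
  assumes "k \<in> {1..3*n+1::nat}"
  obtains q where "q < n" "k = 3*q+1" | q where "q < n" "k = 3*q+2" | q where "q < n" "k = 3*q+3"
   | "k = 3*n+1"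
proof -
  have "k = 3*n+1 \<or> (k-1) div 3 < n \<and> (k = 3*((k-1) div 3)+1 \<or> k = 3*((k-1) div 3)+2 \<or> k = 3*((k-1) div 3)+3)"
    using assms by auto
  then show ?thesis using that by blast
qed


lemma int_GL_MM: "int_GL (3*n+1) (MM n)"
  unfolding int_GL_def
proof (intro exI[of _ "MI n"] ballI conjI)
  fix i k assume i: "i \<in> {1..3*n+1}" and k: "k \<in> {1..3*n+1}"
  show "(\<Sum>j=1..3*n+1. MM n i j * MI n j k) = (if i = k then 1 else 0)"
  proof (cases rule: cases_idx[OF k])
    case (1 q)
    then have e: "\<And>j. MI n j k = dd j (3*q+1) + dd j (3*q+3) - dd j (3*q+2)" using MI1 by simp
    show ?thesis unfolding e
      apply (simp only: distrib_left right_diff_distrib mult_minus_right sum.distrib sum_subtractf sum_negf sum_dd finite_atLeastAtMost MI1[OF 1(1)] MM1[OF 1(1)] MM2[OF 1(1)] MM3[OF 1(1)])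
      using 1 i k by (auto simp add: dd_def)
  next
    case 2
    then have e: "\<And>j. MI n j k = dd j (3*n+1)" using MI2 by simp
    show ?thesis unfolding e
      apply (simp only: distrib_left right_diff_distrib mult_minus_right sum.distrib sum_subtractf sum_negf sum_dd finite_atLeastAtMost MI2 MM4)
      using 2 i k by (auto simp add: dd_def)
  next
    case (3 q)
    then have e: "\<And>j. MI n j k = - dd j (3*q+3)" using MI3 by simp
    show ?thesis unfolding e
      apply (simp only: distrib_left right_diff_distrib mult_minus_right sum.distrib sum_subtractf sum_negf sum_dd finite_atLeastAtMost MI3[OF 3(1)] MM3[OF 3(1)])
      using 3 i k by (auto simp add: dd_def)
  next
    case (4 q)
    then have e: "\<And>j. MI n j k = dd j (3*q+2)" using MI4 by simp
    show ?thesis unfolding e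
      apply (simp only: distrib_left right_diff_distrib mult_minus_right sum.distrib sum_subtractf sum_negf sum_dd finite_atLeastAtMost MI4[OF 4(1)] MM2[OF 4(1)])
      using 4 i k by (auto simp add: dd_def)
  qed
  show "(\<Sum>j=1..3*n+1. MI n i j * MM n j k) = (if i = k then 1 else 0)"
  proof (cases rule: cases_col[OF k])
    case (1 q)
    then have e: "\<And>j. MM n j k = dd j (q+1) + dd j (n+2+q) + dd j (2*n+2+q)" using MM1 by simp
    show ?thesis unfolding e
      apply (simp only: distrib_left right_diff_distrib mult_minus_right sum.distrib sum_subtractf sum_negf sum_dd finite_atLeastAtMost MM1[OF 1(1)] MI1[OF 1(1)] MI3[OF 1(1)] MI4[OF 1(1)])
      using 1 i k by (auto simp add: dd_def)
  next
    case (2 q)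
    then have e: "\<And>j. MM n j k = dd j (2*n+2+q)" using MM2 by simp
    show ?thesis unfolding e
      apply (simp only: distrib_left right_diff_distrib mult_minus_right sum.distrib sum_subtractf sum_negf sum_dd finite_atLeastAtMost MM2[OF 2(1)] MI4[OF 2(1)])
      using 2 i k by (auto simp add: dd_def)
  next
    case (3 q)
    then have e: "\<And>j. MM n j k = - dd j (n+2+q)" using MM3 by simp
    show ?thesis unfolding e
      apply (simp only: distrib_left right_diff_distrib mult_minus_right sum.distrib sum_subtractf sum_negf sum_dd finite_atLeastAtMost MM3[OF 3(1)] MI3[OF 3(1)])
      using 3 i k by (auto simp add: dd_def)
  next
    case 4
    then have e: "\<And>j. MM n j k = dd j (n+1)" using MM4 by simp
    show ?thesis unfolding e
      apply (simp only: distrib_left right_diff_distrib mult_minus_right sum.distrib sum_subtractf sum_negf sum_dd finite_atLeastAtMost MM4 MI2)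
      using 4 i k by (auto simp add: dd_def)
  qed
qed


abbreviation lin :: "nat \<Rightarrow> (nat \<Rightarrow> nat \<Rightarrow> int) \<Rightarrow> pt \<Rightarrow> pt" where
  "lin N M \<equiv> affine_map N M (\<lambda>_. 0)"

lemma lin_sum: "lin N M (\<lambda>i. \<Sum>j\<in>I. f j i) = (\<lambda>i. \<Sum>j\<in>I. lin N M (f j) i)"
  unfolding affine_map_def
  by (rule ext) (auto simp: sum_distrib_left intro: sum.swap)

lemma lin_comb: "lin N M (\<lambda>i. \<Sum>v\<in>V. c v * v i) = (\<lambda>i. \<Sum>v\<in>V. c v * lin N M v i)"
  unfolding affine_map_def
  apply (rule ext)
  apply (auto simp add: sum_distrib_left mult.left_commute)
  apply (rule sum.swap)
  done

lemma lin_add: "lin N M (x \<oplus> y) = lin N M x \<oplus> lin N M y"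
  unfolding affine_map_def vadd_def
  by (rule ext) (auto simp: distrib_left sum.distrib)

lemma aff_split: "affine_map N M v x = lin N M x \<oplus> (\<lambda>i. if i \<in> {1..N} then of_int (v i) else 0)"
  unfolding affine_map_def vadd_def by auto

lemma lin_e: "k \<in> {1..N} \<Longrightarrow> lin N M (e k) = (\<lambda>i. if i \<in> {1..N} then of_int (M i k) else 0)"
  unfolding affine_map_def unit_vec_def
  by (rule ext) (simp add: if_distrib[of "\<lambda>x. _ * x"] cong: if_cong)

lemma conv_hull_image:
  assumes fin: "finite V" and inj: "inj_on T V"
    and aff: "\<And>c. sum c V = 1 \<Longrightarrow> T (\<lambda>i. \<Sum>v\<in>V. c v * v i) = (\<lambda>i. \<Sum>v\<in>V. c v * T v i)"
  shows "T ` conv_hull V = conv_hull (T ` V)"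
proof
  show "T ` conv_hull V \<subseteq> conv_hull (T ` V)"
  proof
    fix y assume "y \<in> T ` conv_hull V"
    then obtain c where c: "\<forall>v\<in>V. 0 \<le> c v" "sum c V = 1" and y: "y = T (\<lambda>i. \<Sum>v\<in>V. c v * v i)"
      unfolding conv_hull_def by auto
    define c' where "c' = c \<circ> the_inv_into V T"
    have cc: "c' (T v) = c v" if "v \<in> V" for v
      unfolding c'_def using the_inv_into_f_f[OF inj that] by simp
    have "y = (\<lambda>i. \<Sum>v\<in>V. c v * T v i)" using y aff[OF c(2)] by simp
    also have "\<dots> = (\<lambda>i. \<Sum>u\<in>T ` V. c' u * u i)"
      by (rule ext) (simp add: sum.reindex[OF inj] cc)
    finally show "y \<in> conv_hull (T ` V)"
      unfolding conv_hull_def using c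
      by (intro CollectI exI[of _ c']) (auto simp: cc sum.reindex[OF inj])
  qed
  show "conv_hull (T ` V) \<subseteq> T ` conv_hull V"
  proof
    fix y assume "y \<in> conv_hull (T ` V)"
    then obtain c where c: "\<forall>v\<in>T ` V. 0 \<le> c v" "sum c (T ` V) = 1" and y: "y = (\<lambda>i. \<Sum>u\<in>T ` V. c u * u i)"
      unfolding conv_hull_def by auto
    have s1: "sum (c \<circ> T) V = 1" using c(2) by (simp add: sum.reindex[OF inj])
    have "y = (\<lambda>i. \<Sum>v\<in>V. (c \<circ> T) v * T v i)" using y by (simp add: sum.reindex[OF inj])
    also have "\<dots> = T (\<lambda>i. \<Sum>v\<in>V. (c \<circ> T) v * v i)" using aff[OF s1] by simp
    moreover have "(\<lambda>i. \<Sum>v\<in>V. (c \<circ> T) v * v i) \<in> conv_hull V"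
      unfolding conv_hull_def using c s1 by auto
    ultimately show "y \<in> T ` conv_hull V" by auto
  qed
qed

lemma msum_affine:
  assumes "finite I"
  shows "msum I (\<lambda>j. (\<lambda>x. lin N M x \<oplus> w j) ` P j) = (\<lambda>x. lin N M x \<oplus> (\<lambda>i. \<Sum>j\<in>I. w j i)) ` msum I P"
proof
  show "msum I (\<lambda>j. (\<lambda>x. lin N M x \<oplus> w j) ` P j) \<subseteq> (\<lambda>x. lin N M x \<oplus> (\<lambda>i. \<Sum>j\<in>I. w j i)) ` msum I P"
  proof
    fix y assume "y \<in> msum I (\<lambda>j. (\<lambda>x. lin N M x \<oplus> w j) ` P j)"
    then obtain g where g: "\<forall>j\<in>I. g j \<in> (\<lambda>x. lin N M x \<oplus> w j) ` P j" and y: "y = (\<lambda>i. \<Sum>j\<in>I. g j i)"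
      unfolding msum_def by auto
    from g obtain f where f: "\<forall>j\<in>I. f j \<in> P j \<and> g j = lin N M (f j) \<oplus> w j"
      by (auto dest!: bchoice simp: image_iff) (metis)
    have "y = lin N M (\<lambda>i. \<Sum>j\<in>I. f j i) \<oplus> (\<lambda>i. \<Sum>j\<in>I. w j i)"
      unfolding y lin_sum vadd_def using f by (auto simp: sum.distrib vadd_def intro!: ext sum.cong)
    moreover have "(\<lambda>i. \<Sum>j\<in>I. f j i) \<in> msum I P" unfolding msum_def using f by auto
    ultimately show "y \<in> (\<lambda>x. lin N M x \<oplus> (\<lambda>i. \<Sum>j\<in>I. w j i)) ` msum I P" by auto
  qed
  show "(\<lambda>x. lin N M x \<oplus> (\<lambda>i. \<Sum>j\<in>I. w j i)) ` msum I P \<subseteq> msum I (\<lambda>j. (\<lambda>x. lin N M x \<oplus> w j) ` P j)"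
  proof
    fix y assume "y \<in> (\<lambda>x. lin N M x \<oplus> (\<lambda>i. \<Sum>j\<in>I. w j i)) ` msum I P"
    then obtain f where f: "\<forall>j\<in>I. f j \<in> P j" and y: "y = lin N M (\<lambda>i. \<Sum>j\<in>I. f j i) \<oplus> (\<lambda>i. \<Sum>j\<in>I. w j i)"
      unfolding msum_def by auto
    have "y = (\<lambda>i. \<Sum>j\<in>I. (lin N M (f j) \<oplus> w j) i)"
      unfolding y lin_sum vadd_def by (simp add: sum.distrib)
    then show "y \<in> msum I (\<lambda>j. (\<lambda>x. lin N M x \<oplus> w j) ` P j)"
      unfolding msum_def using f by (intro CollectI exI[of _ "\<lambda>j. lin N M (f j) \<oplus> w j"]) auto
  qed
qed

lemma image_mplus:
  assumes "\<And>x y. F (x \<oplus> y) = G x \<oplus> H y"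
  shows "F ` mplus X Y = mplus (G ` X) (H ` Y)"
proof
  show "F ` mplus X Y \<subseteq> mplus (G ` X) (H ` Y)" unfolding mplus_def using assms by auto
  show "mplus (G ` X) (H ` Y) \<subseteq> F ` mplus X Y"
  proof
    fix z assume "z \<in> mplus (G ` X) (H ` Y)"
    then obtain a b where "a \<in> X" "b \<in> Y" "z = G a \<oplus> H b" unfolding mplus_def by auto
    then have "z = F (a \<oplus> b)" "a \<oplus> b \<in> mplus X Y" using assms unfolding mplus_def by auto
    then show "z \<in> F ` mplus X Y" by auto
  qed
qed

lemma msum_reindex:
  assumes inj: "inj_on h I"
  shows "msum (h ` I) P = msum I (P \<circ> h)"
proof
  show "msum (h ` I) P \<subseteq> msum I (P \<circ> h)"
  proof
    fix x assume "x \<in> msum (h ` I) P"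
    then obtain f where f: "\<forall>j\<in>h ` I. f j \<in> P j" and x: "x = (\<lambda>i. \<Sum>j\<in>h ` I. f j i)"
      unfolding msum_def by auto
    show "x \<in> msum I (P \<circ> h)" unfolding msum_def
      using f by (intro CollectI exI[of _ "f \<circ> h"]) (auto simp: x sum.reindex[OF inj])
  qed
  show "msum I (P \<circ> h) \<subseteq> msum (h ` I) P"
  proof
    fix x assume "x \<in> msum I (P \<circ> h)"
    then obtain f where f: "\<forall>j\<in>I. f j \<in> P (h j)" and x: "x = (\<lambda>i. \<Sum>j\<in>I. f j i)"
      unfolding msum_def by auto
    define g where "g = f \<circ> the_inv_into I h"
    have gg: "g (h j) = f j" if "j \<in> I" for j
      unfolding g_def using the_inv_into_f_f[OF inj that] by simp
    show "x \<in> msum (h ` I) P" unfolding msum_def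
      using f by (intro CollectI exI[of _ g]) (auto simp: gg x sum.reindex[OF inj])
  qed
qed

lemma msum_union:
  assumes "finite I" "finite J" "I \<inter> J = {}"
  shows "msum (I \<union> J) P = mplus (msum I P) (msum J P)"
proof
  show "msum (I \<union> J) P \<subseteq> mplus (msum I P) (msum J P)"
  proof
    fix x assume "x \<in> msum (I \<union> J) P"
    then obtain f where f: "\<forall>j\<in>I \<union> J. f j \<in> P j" and x: "x = (\<lambda>i. \<Sum>j\<in>I \<union> J. f j i)"
      unfolding msum_def by auto
    have "x = (\<lambda>i. \<Sum>j\<in>I. f j i) \<oplus> (\<lambda>i. \<Sum>j\<in>J. f j i)"
      unfolding x vadd_def using assms by (simp add: sum.union_disjoint)
    moreover have "(\<lambda>i. \<Sum>j\<in>I. f j i) \<in> msum I P" "(\<lambda>i. \<Sum>j\<in>J. f j i) \<in> msum J P"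
      unfolding msum_def using f by auto
    ultimately show "x \<in> mplus (msum I P) (msum J P)" unfolding mplus_def by auto
  qed
  show "mplus (msum I P) (msum J P) \<subseteq> msum (I \<union> J) P"
  proof
    fix x assume "x \<in> mplus (msum I P) (msum J P)"
    then obtain f g where f: "\<forall>j\<in>I. f j \<in> P j" and g: "\<forall>j\<in>J. g j \<in> P j"
      and x: "x = (\<lambda>i. \<Sum>j\<in>I. f j i) \<oplus> (\<lambda>i. \<Sum>j\<in>J. g j i)"
      unfolding msum_def mplus_def by auto
    let ?h = "\<lambda>j. if j \<in> I then f j else g j"
    have "x = (\<lambda>i. \<Sum>j\<in>I \<union> J. ?h j i)"
      unfolding x vadd_def using assms
      by (auto simp: sum.union_disjoint intro!: ext arg_cong2[where f="(+)"] sum.cong)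
    then show "x \<in> msum (I \<union> J) P" unfolding msum_def using f g by (intro CollectI exI[of _ ?h]) auto
  qed
qed



lemma e_eq_iff: "e a = e b \<longleftrightarrow> a = b"
proof
  assume "e a = e b" then have "e a a = e b a" by simp
  then show "a = b" unfolding unit_vec_def by (simp split: if_splits)
qed simp

context fixes n :: nat
begin

abbreviation "L \<equiv> lin (3*n+1) (MM n)"

lemma Lc1: "q < n \<Longrightarrow> L (e (3*q+1)) = e (q+1) \<oplus> e (n+2+q) \<oplus> e (2*n+2+q)"
proof -
  assume q: "q < n"
  have m: "3*q+1 \<in> {1..3*n+1}" using q by auto
  show ?thesis unfolding lin_e[OF m] MM1[OF q] using q
    by (auto simp: fun_eq_iff dd_def unit_vec_def vadd_def)
qed
lemma Lc2: "q < n \<Longrightarrow> L (e (3*q+2)) = e (2*n+2+q)"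
proof -
  assume q: "q < n"
  have m: "3*q+2 \<in> {1..3*n+1}" using q by auto
  show ?thesis unfolding lin_e[OF m] MM2[OF q] using q
    by (auto simp: fun_eq_iff dd_def unit_vec_def vadd_def)
qed
lemma Lc3: "q < n \<Longrightarrow> L (e (3*q+3)) = (\<lambda>r. - e (n+2+q) r)"
proof -
  assume q: "q < n"
  have m: "3*q+3 \<in> {1..3*n+1}" using q by auto
  show ?thesis unfolding lin_e[OF m] MM3[OF q] using q
    by (auto simp: fun_eq_iff dd_def unit_vec_def vadd_def)
qed
lemma Lc4: "L (e (3*n+1)) = e (n+1)"
proof -
  have m: "3*n+1 \<in> {1..3*n+1}" by auto
  show ?thesis unfolding lin_e[OF m] MM4
    by (auto simp: fun_eq_iff dd_def unit_vec_def vadd_def)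
qed

definition w1 :: "nat \<Rightarrow> pt" where "w1 q = (\<lambda>r. - e (2*n+2+q) r)"
definition w2 :: "nat \<times> nat \<Rightarrow> pt" where "w2 p = (\<lambda>r. - (e (2*n+2+fst p) r + e (2*n+2+snd p) r))"

lemma seg1: "q < n \<Longrightarrow> L (e (3*q+1) \<oplus> e (3*q+3)) \<oplus> w1 q = e (q+1)"
  by (simp only: lin_add Lc1[of q] Lc3[of q] w1_def) (auto simp: fun_eq_iff vadd_def)
lemma seg2: "q < n \<Longrightarrow> L (e (3*q+2) \<oplus> e (3*n+1)) \<oplus> w1 q = e (n+1)"
  by (simp only: lin_add Lc2[of q] Lc4 w1_def) (auto simp: fun_eq_iff vadd_def)

lemma tri1: "i < n \<Longrightarrow> j < n \<Longrightarrow> L (e (3*i+1) \<oplus> e (3*i+3) \<oplus> e (3*j+2)) \<oplus> w2 (i,j) = e (i+1)"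
  by (simp only: lin_add Lc1[of i] Lc3[of i] Lc2[of j] w2_def fst_conv snd_conv) (auto simp: fun_eq_iff vadd_def)
lemma tri2: "i < n \<Longrightarrow> j < n \<Longrightarrow> L (e (3*i+2) \<oplus> e (3*j+1) \<oplus> e (3*j+3)) \<oplus> w2 (i,j) = e (j+1)"
  by (simp only: lin_add Lc2[of i] Lc1[of j] Lc3[of j] w2_def fst_conv snd_conv) (auto simp: fun_eq_iff vadd_def)
lemma tri3: "i < n \<Longrightarrow> j < n \<Longrightarrow> L (e (3*i+2) \<oplus> e (3*j+2) \<oplus> e (3*n+1)) \<oplus> w2 (i,j) = e (n+1)"
  by (simp only: lin_add Lc2[of i] Lc2[of j] Lc4 w2_def fst_conv snd_conv) (auto simp: fun_eq_iff vadd_def)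

lemma aff_T: "sum c V = 1 \<Longrightarrow> L (\<lambda>i. \<Sum>v\<in>V. c v * v i) \<oplus> w = (\<lambda>i. \<Sum>v\<in>V. c v * (L v \<oplus> w) i)"
  unfolding lin_comb vadd_def
  by (auto simp: fun_eq_iff distrib_left sum.distrib sum_distrib_right[symmetric])

end


lemma inj2: "T x \<noteq> T y \<Longrightarrow> inj_on T {x, y}"
  by (auto simp: inj_on_def)
lemma inj3: "T x \<noteq> T y \<Longrightarrow> T x \<noteq> T z \<Longrightarrow> T y \<noteq> T z \<Longrightarrow> inj_on T {x, y, z}"
  by (auto simp: inj_on_def)

lemma msum_cong: "(\<And>j. j \<in> I \<Longrightarrow> P j = P' j) \<Longrightarrow> msum I P = msum I P'"
  unfolding msum_def by auto

lemma seg_img: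
  assumes q: "q < n"
  shows "(\<lambda>x. L n x \<oplus> w1 n q) ` conv_hull {e (3*q+1) \<oplus> e (3*q+3), e (3*q+2) \<oplus> e (3*n+1)} = Delta {q+1, n+1}"
proof -
  let ?T = "\<lambda>x. L n x \<oplus> w1 n q"
  have i1: "?T (e (3*q+1) \<oplus> e (3*q+3)) = e (q+1)" using seg1[OF q] .
  have i2: "?T (e (3*q+2) \<oplus> e (3*n+1)) = e (n+1)" using seg2[OF q] .
  have inj: "inj_on ?T {e (3*q+1) \<oplus> e (3*q+3), e (3*q+2) \<oplus> e (3*n+1)}"
    by (rule inj2) (simp only: i1 i2 e_eq_iff, use q in simp)
  show ?thesis unfolding Delta_def
    by (subst conv_hull_image[OF _ inj]) (auto simp only: aff_T finite.intros image_insert image_empty i1 i2)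
qed

lemma tri_img:
  assumes ij: "i < j" "j < n"
  shows "(\<lambda>x. L n x \<oplus> w2 n (i,j)) ` conv_hull {e (3*i+1) \<oplus> e (3*i+3) \<oplus> e (3*j+2),
                             e (3*i+2) \<oplus> e (3*j+1) \<oplus> e (3*j+3),
                             e (3*i+2) \<oplus> e (3*j+2) \<oplus> e (3*n+1)} = Delta {i+1, j+1, n+1}"
proof -
  let ?T = "\<lambda>x. L n x \<oplus> w2 n (i,j)"
  have i': "i < n" using ij by simp
  have i1: "?T (e (3*i+1) \<oplus> e (3*i+3) \<oplus> e (3*j+2)) = e (i+1)" using tri1[OF i' ij(2)] .
  have i2: "?T (e (3*i+2) \<oplus> e (3*j+1) \<oplus> e (3*j+3)) = e (j+1)" using tri2[OF i' ij(2)] .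
  have i3: "?T (e (3*i+2) \<oplus> e (3*j+2) \<oplus> e (3*n+1)) = e (n+1)" using tri3[OF i' ij(2)] .
  have inj: "inj_on ?T {e (3*i+1) \<oplus> e (3*i+3) \<oplus> e (3*j+2),
                             e (3*i+2) \<oplus> e (3*j+1) \<oplus> e (3*j+3),
                             e (3*i+2) \<oplus> e (3*j+2) \<oplus> e (3*n+1)}"
    by (rule inj3) (simp only: i1 i2 i3 e_eq_iff, use ij in simp)+
  show ?thesis unfolding Delta_def
    by (subst conv_hull_image[OF _ inj]) (auto simp only: aff_T finite.intros image_insert image_empty i1 i2 i3)
qed



definition v0 :: "nat \<Rightarrow> nat \<Rightarrow> int" where
  "v0 n i = (if 2*n+2 \<le> i \<and> i \<le> 3*n+1 then - int n else 0)"

lemma card_fst: "k < n \<Longrightarrow> card {p \<in> {(i,j). i < j \<and> j \<le> n - 1}. fst p = k} = n - Suc k"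
proof -
  assume k: "k < n"
  have "{p \<in> {(i,j). i < j \<and> j \<le> n - 1}. fst p = k} = (\<lambda>b. (k,b)) ` {k<..<n}" using k by auto
  then show ?thesis by (simp add: card_image inj_on_def)
qed

lemma card_snd: "k < n \<Longrightarrow> card {p \<in> {(i,j). i < j \<and> j \<le> n - 1}. snd p = k} = k"
proof -
  assume k: "k < n"
  have "{p \<in> {(i,j). i < j \<and> j \<le> n - 1}. snd p = k} = (\<lambda>a. (a,k)) ` {..<k}" using k by auto
  then show ?thesis by (simp add: card_image inj_on_def)
qed

lemma finP: "finite {(i,j). i < j \<and> j \<le> n - (1::nat)}"
  by (rule finite_subset[of _ "{..n} \<times> {..n}"]) auto

lemma sum_ind: "finite A \<Longrightarrow> (\<Sum>p\<in>A. if R p then 1 else 0 :: real) = real (card {p\<in>A. R p})"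
  by (simp add: sum.inter_filter[symmetric])

lemma W_sum:
  "(\<lambda>r. \<Sum>q<n. w1 n q r) \<oplus> (\<lambda>r. \<Sum>p\<in>{(i,j). i < j \<and> j \<le> n - 1}. w2 n p r)
    = (\<lambda>r. if r \<in> {1..3*n+1} then of_int (v0 n r) else 0)"
proof (rule ext)
  fix r
  let ?P = "{(i,j). i < j \<and> j \<le> n - 1}"
  show "((\<lambda>r. \<Sum>q<n. w1 n q r) \<oplus> (\<lambda>r. \<Sum>p\<in>?P. w2 n p r)) r
    = (if r \<in> {1..3*n+1} then of_int (v0 n r) else 0)"
  proof (cases "\<exists>k<n. r = 2*n+2+k")
    case True
    then obtain k where k: "k < n" "r = 2*n+2+k" by auto
    have a: "\<And>q. e (2*n+2+q) r = (if q = k then 1 else 0)" using k unfolding unit_vec_def by auto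
    have s1: "(\<Sum>q<n. w1 n q r) = -1" unfolding w1_def a using k by (simp add: sum_negf)
    have s2: "(\<Sum>p\<in>?P. w2 n p r) = - (real (n - Suc k) + real k)"
      unfolding w2_def a
      by (simp only: sum_negf sum.distrib sum_ind[OF finP] card_fst[OF k(1)] card_snd[OF k(1)])
    show ?thesis unfolding vadd_def s1 s2 using k by (simp add: v0_def of_nat_diff)
  next
    case False
    have a: "\<And>q. q < n \<Longrightarrow> e (2*n+2+q) r = 0" using False unfolding unit_vec_def by auto
    have s1: "(\<Sum>q<n. w1 n q r) = 0" unfolding w1_def using a by simp
    have s2: "(\<Sum>p\<in>?P. w2 n p r) = 0" unfolding w2_def
      by (rule sum.neutral) (auto simp: a[simplified])
    have "\<not> (2*n+2 \<le> r \<and> r \<le> 3*n+1)"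
    proof
      assume h: "2*n+2 \<le> r \<and> r \<le> 3*n+1"
      then have "r-(2*n+2) < n \<and> r = 2*n+2+(r-(2*n+2))" by arith
      with False show False by blast
    qed
    then have "v0 n r = 0" unfolding v0_def by simp
    then show ?thesis unfolding vadd_def s1 s2 by simp
  qed
qed



definition h1 :: "nat \<Rightarrow> nat \<Rightarrow> nat set" where "h1 n q = {q+1, n+1}"
definition h2 :: "nat \<Rightarrow> nat \<times> nat \<Rightarrow> nat set" where "h2 n p = {fst p+1, snd p+1, n+1}"

lemma I_fam_split:
  "I_fam n = h1 n ` {..<n} \<union> h2 n ` {(i,j). i < j \<and> j \<le> n - 1}"
proof
  show "I_fam n \<subseteq> h1 n ` {..<n} \<union> h2 n ` {(i,j). i < j \<and> j \<le> n - 1}"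
  proof
    fix X assume "X \<in> I_fam n"
    then obtain S where X: "X = insert (n+1) S" and S: "S \<subseteq> {1..n}" "card S \<in> {1,2}"
      unfolding I_fam_def by auto
    show "X \<in> h1 n ` {..<n} \<union> h2 n ` {(i,j). i < j \<and> j \<le> n - 1}"
    proof (cases "card S = 1")
      case True
      then obtain k where k: "S = {k}" by (metis card_1_singletonE)
      then have "k \<in> {1..n}" using S by auto
      then have "X = h1 n (k-1)" "k - 1 < n" unfolding X k h1_def by auto
      then show ?thesis by blast
    next
      case False
      then have "card S = 2" using S by auto
      then obtain x y where xy: "S = {x,y}" "x \<noteq> y" by (auto simp: card_2_iff)
      then have xyr: "x \<in> {1..n}" "y \<in> {1..n}" using S by auto
      show ?thesis
      proof (cases "x < y")
        case True
        then have "X = h2 n (x-1, y-1)" "(x-1, y-1) \<in> {(i,j). i < j \<and> j \<le> n - 1}"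
          unfolding X xy h2_def using xyr by auto
        then show ?thesis by blast
      next
        case False
        then have "X = h2 n (y-1, x-1)" "(y-1, x-1) \<in> {(i,j). i < j \<and> j \<le> n - 1}"
          unfolding X xy h2_def using xyr xy(2) by auto
        then show ?thesis by blast
      qed
    qed
  qed
  show "h1 n ` {..<n} \<union> h2 n ` {(i,j). i < j \<and> j \<le> n - 1} \<subseteq> I_fam n"
  proof
    fix X assume "X \<in> h1 n ` {..<n} \<union> h2 n ` {(i,j). i < j \<and> j \<le> n - 1}"
    then consider q where "q < n" "X = h1 n q" | a b where "a < b" "b \<le> n - 1" "X = h2 n (a,b)" by auto
    then show "X \<in> I_fam n"
    proof cases
      case 1
      then show ?thesis unfolding I_fam_def h1_def
        by (intro CollectI exI[of _ "{q+1}"]) auto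
    next
      case 2
      then show ?thesis unfolding I_fam_def h2_def
        by (intro CollectI exI[of _ "{a+1,b+1}"]) auto
    qed
  qed
qed

lemma h_disj: "h1 n ` {..<n} \<inter> h2 n ` {(i,j). i < j \<and> j \<le> n - 1} = {}"
proof -
  have "h1 n q \<noteq> h2 n (a,b)" if "q < n" "a < b" "b \<le> n - 1" for q a b
  proof
    assume h: "h1 n q = h2 n (a,b)"
    have "a+1 \<in> h1 n q" "b+1 \<in> h1 n q" using h unfolding h2_def by auto
    then show False using that unfolding h1_def by auto
  qed
  then show ?thesis by blast
qed

lemma inj_h1: "inj_on (h1 n) {..<n}"
proof (rule inj_onI)
  fix x y assume "x \<in> {..<n}" "y \<in> {..<n}" "h1 n x = h1 n y"
  then have "x+1 \<in> h1 n y" unfolding h1_def by auto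
  with \<open>x \<in> {..<n}\<close> show "x = y" unfolding h1_def by auto
qed

lemma inj_h2: "inj_on (h2 n) {(i,j). i < j \<and> j \<le> n - 1}"
proof (rule inj_onI)
  fix p p' assume p: "p \<in> {(i,j). i < j \<and> j \<le> n - 1}" and p': "p' \<in> {(i,j). i < j \<and> j \<le> n - 1}"
    and h: "h2 n p = h2 n p'"
  obtain a b where ab: "p = (a,b)" by (cases p)
  obtain c d where cd: "p' = (c,d)" by (cases p')
  have r: "a < b" "b < n" "c < d" "d < n" using p p' ab cd by auto
  have hh: "{a+1, b+1, n+1} = {c+1, d+1, n+1}" using h unfolding h2_def ab cd by simp
  have "a+1 \<in> {c+1, d+1, n+1}" "b+1 \<in> {c+1, d+1, n+1}" "c+1 \<in> {a+1, b+1, n+1}" "d+1 \<in> {a+1, b+1, n+1}"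
    using hh by blast+
  then have "(a = c \<or> a = d) \<and> (b = c \<or> b = d) \<and> (c = a \<or> c = b) \<and> (d = a \<or> d = b)" using r by auto
  then show "p = p'" using r ab cd by auto
qed

lemma Qbar_split:
  "Qbar n = mplus (msum {..<n} (\<lambda>q. Delta {q+1, n+1}))
                  (msum {(i,j). i < j \<and> j \<le> n - 1} (\<lambda>(i,j). Delta {i+1, j+1, n+1}))"
proof -
  have "Qbar n = mplus (msum (h1 n ` {..<n}) Delta) (msum (h2 n ` {(i,j). i < j \<and> j \<le> n - 1}) Delta)"
    unfolding Qbar_def I_fam_split by (rule msum_union) (use finP h_disj in auto)
  also have "\<dots> = mplus (msum {..<n} (Delta \<circ> h1 n)) (msum {(i,j). i < j \<and> j \<le> n - 1} (Delta \<circ> h2 n))"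
    by (simp only: msum_reindex[OF inj_h1] msum_reindex[OF inj_h2])
  also have "\<dots> = mplus (msum {..<n} (\<lambda>q. Delta {q+1, n+1}))
                  (msum {(i,j). i < j \<and> j \<le> n - 1} (\<lambda>(i,j). Delta {i+1, j+1, n+1}))"
    by (intro arg_cong2[where f=mplus] msum_cong) (auto simp: h1_def h2_def)
  finally show ?thesis .
qed



lemma in_Rn_e: "k \<in> {1..m} \<Longrightarrow> in_Rn m (e k)"
  unfolding in_Rn_def unit_vec_def by auto
lemma in_Rn_add: "in_Rn m x \<Longrightarrow> in_Rn m y \<Longrightarrow> in_Rn m (x \<oplus> y)"
  unfolding in_Rn_def vadd_def by auto
lemma in_Rn_conv: "(\<And>v. v \<in> V \<Longrightarrow> in_Rn m v) \<Longrightarrow> conv_hull V \<subseteq> Collect (in_Rn m)"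
  unfolding in_Rn_def conv_hull_def by (auto intro!: sum.neutral)
lemma in_Rn_msum: "(\<And>j. j \<in> I \<Longrightarrow> P j \<subseteq> Collect (in_Rn m)) \<Longrightarrow> msum I P \<subseteq> Collect (in_Rn m)"
  unfolding in_Rn_def msum_def by (auto intro!: sum.neutral)
lemma in_Rn_mplus: "A \<subseteq> Collect (in_Rn m) \<Longrightarrow> B \<subseteq> Collect (in_Rn m) \<Longrightarrow> mplus A B \<subseteq> Collect (in_Rn m)"
  unfolding mplus_def using in_Rn_add by blast
lemma in_Rn_mono: "in_Rn m x \<Longrightarrow> m \<le> N \<Longrightarrow> in_Rn N x"
  unfolding in_Rn_def by auto

lemma Q_in: "Q n \<subseteq> Collect (in_Rn (3*n+1))"
  unfolding Q_def
  by (intro in_Rn_mplus in_Rn_msum) (auto intro!: in_Rn_conv in_Rn_add in_Rn_e)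

lemma Qbar_in: "Qbar n \<subseteq> Collect (in_Rn (n+1))"
  unfolding Qbar_def Delta_def
  by (intro in_Rn_msum in_Rn_conv) (auto simp: I_fam_def intro!: in_Rn_e)

lemma Q_image: "affine_map (3*n+1) (MM n) (v0 n) ` Q n = Qbar n"
proof -
  let ?P = "{(i,j). i < j \<and> j \<le> n - 1}"
  let ?W1 = "\<lambda>r. \<Sum>q<n. w1 n q r"
  let ?W2 = "\<lambda>r. \<Sum>p\<in>?P. w2 n p r"
  have F: "affine_map (3*n+1) (MM n) (v0 n) (x \<oplus> y) = (L n x \<oplus> ?W1) \<oplus> (L n y \<oplus> ?W2)" for x y
  proof -
    have "affine_map (3*n+1) (MM n) (v0 n) (x \<oplus> y) = (L n x \<oplus> L n y) \<oplus> (?W1 \<oplus> ?W2)"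
      by (simp only: aff_split[of _ _ "v0 n"] lin_add W_sum)
    also have "\<dots> = (L n x \<oplus> ?W1) \<oplus> (L n y \<oplus> ?W2)"
      by (simp only: vadd_def add_ac)
    finally show ?thesis .
  qed
  have A: "(\<lambda>x. L n x \<oplus> ?W1) ` msum {..<n} (\<lambda>i. conv_hull {e (3*i+1) \<oplus> e (3*i+3), e (3*i+2) \<oplus> e (3*n+1)})
     = msum {..<n} (\<lambda>q. Delta {q+1, n+1})"
    apply (subst msum_affine[symmetric], simp)
    apply (rule msum_cong)
    apply (rule seg_img)
    apply simp
    done
  have B: "(\<lambda>x. L n x \<oplus> ?W2) ` msum ?P
        (\<lambda>(i,j). conv_hull {e (3*i+1) \<oplus> e (3*i+3) \<oplus> e (3*j+2),
                             e (3*i+2) \<oplus> e (3*j+1) \<oplus> e (3*j+3),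
                             e (3*i+2) \<oplus> e (3*j+2) \<oplus> e (3*n+1)})
     = msum ?P (\<lambda>(i,j). Delta {i+1, j+1, n+1})"
    apply (subst msum_affine[symmetric], rule finP)
    apply (rule msum_cong)
    apply (clarsimp simp only: split_paired_all case_prod_conv mem_Collect_eq)
    apply (rule tri_img)
     apply simp
    apply simp
    done
  show ?thesis unfolding Q_def Qbar_split
    apply (subst image_mplus[of "affine_map (3*n+1) (MM n) (v0 n)" "\<lambda>x. L n x \<oplus> ?W1" "\<lambda>y. L n y \<oplus> ?W2", OF F])
    apply (simp only: A B)
    done
qed


theorem mainTheorem9:
  fixes n :: nat
  assumes "n \<ge> 1"
  shows "unimod_equiv_dims (3*n+1) (Q n) (n+1) (Qbar n)"
proof -
  have Qb: "Qbar n \<subseteq> Collect (in_Rn (3*n+1))" using Qbar_in[of n] in_Rn_mono[of "n+1" _ "3*n+1"] by auto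
  show ?thesis unfolding unimod_equiv_dims_def unimod_equiv_def
  proof (intro conjI exI)
    show "n+1 < 3*n+1" using assms by simp
    show "Q n \<subseteq> Collect (in_Rn (3*n+1))" by (rule Q_in)
    show "Q n \<subseteq> Collect (in_Rn (3*n+1))" by (rule Q_in)
    show "Qbar n \<subseteq> Collect (in_Rn (n+1))" by (rule Qbar_in)
    show "Qbar n \<subseteq> Collect (in_Rn (3*n+1))" by (rule Qb)
    show "int_GL (3*n+1) (MM n)" by (rule int_GL_MM)
    show "Qbar n = affine_map (3*n+1) (MM n) (v0 n) ` Q n" by (rule Q_image[symmetric])
  qed
qed


end
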